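(* Let $\mathcal H_1=\mathcal H_2=\mathbb C^2$ and let $|\phi_1\rangle\in\mathcal H_2\otimes\mathcal H_1$ be a unit vector. The two-outcome qubit $1$-tester $T_1=\frac12|\phi_1\rangle\langle\phi_1|$, $T_2=\frac12(I_2\otimes I_1-|\phi_1\rangle\langle\phi_1|)$ (with normalization $I_2\otimes\frac12I_1$) is extremal if and only if $|\phi_1\rangle$ is not a product vector $|f\rangle\otimes|e\rangle$.
   Context: A quantum $1$-tester with $M$ outcomes is a family of positive operators $\{T_i\}_{i=1}^M$ on $\mathcal H_2\otimes\mathcal H_1$ with $\sum_iT_i=I_2\otimes\rho$ for a density operator $\rho$ on $\mathcal H_1$; extremal means an extreme point of the convex set of all such testers with $M$ outcomes. *)

theory Defs
  imports "HOL-Analysis.Analysis"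
begin

text \<open>The tensor product
 H2 (x) H1 is indexed by the product type 'b \<times> 'a (first component = H2 index).\<close>

definition psd :: "complex^'n^'n \<Rightarrow> bool" where
  "psd A \<longleftrightarrow> (\<forall>x::complex^'n.
      Im (\<Sum>i\<in>UNIV. \<Sum>j\<in>UNIV. cnj (x$i) * A$i$j * x$j) = 0 \<and>
      Re (\<Sum>i\<in>UNIV. \<Sum>j\<in>UNIV. cnj (x$i) * A$i$j * x$j) \<ge> 0)"

definition density :: "complex^'n^'n \<Rightarrow> bool" where
  "density \<rho> \<longleftrightarrow> psd \<rho> \<and> trace \<rho> = 1"

definition kron :: "complex^'b^'b \<Rightarrow> complex^'a^'a \<Rightarrow> complex^('b \<times> 'a)^('b \<times> 'a)" where
  "kron A B = (\<chi> i j. A$(fst i)$(fst j) * B$(snd i)$(snd j))"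

definition tensor_vec :: "complex^'b \<Rightarrow> complex^'a \<Rightarrow> complex^('b \<times> 'a)" where
  "tensor_vec f e = (\<chi> i. f$(fst i) * e$(snd i))"

definition ketbra :: "complex^'n \<Rightarrow> complex^'n^'n" where
  "ketbra \<phi> = (\<chi> i j. \<phi>$i * cnj (\<phi>$j))"

definition is_tester :: "nat \<Rightarrow> (nat \<Rightarrow> complex^('b::finite \<times> 'a::finite)^('b \<times> 'a)) \<Rightarrow> bool" where
  "is_tester M T \<longleftrightarrow> (\<forall>i\<in>{1..M}. psd (T i)) \<and>
     (\<exists>\<rho>::complex^'a^'a. density \<rho> \<and> (\<Sum>i=1..M. T i) = kron (mat 1 :: complex^'b^'b) \<rho>)"

definition extremal_tester :: "nat \<Rightarrow> (nat \<Rightarrow> complex^('b::finite \<times> 'a::finite)^('b \<times> 'a)) \<Rightarrow> bool" where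
  "extremal_tester M T \<longleftrightarrow> is_tester M T \<and>
     (\<forall>S U (t::real). is_tester M S \<and> is_tester M U \<and> 0 < t \<and> t < 1 \<and>
        (\<forall>i\<in>{1..M}. T i = t *\<^sub>R S i + (1 - t) *\<^sub>R U i)
        \<longrightarrow> (\<forall>i\<in>{1..M}. S i = T i \<and> U i = T i))"

end

theory Submission
  imports Defs
begin


definition cin :: "complex^'n \<Rightarrow> complex^'n \<Rightarrow> complex" where
  "cin y x = (\<Sum>i\<in>UNIV. cnj (y$i) * x$i)"
definition qf :: "complex^'n^'n \<Rightarrow> complex^'n \<Rightarrow> complex^'n \<Rightarrow> complex" where
  "qf A y x = (\<Sum>i\<in>UNIV. \<Sum>j\<in>UNIV. cnj (y$i) * A$i$j * x$j)"

lemma psd_qf: "psd A \<longleftrightarrow> (\<forall>x. Im (qf A x x) = 0 \<and> Re (qf A x x) \<ge> 0)"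
  by (simp add: psd_def qf_def)

lemma qf_add_l: "qf A (y + z) x = qf A y x + qf A z x"
  by (simp add: qf_def ring_distribs sum.distrib)
lemma qf_add_r: "qf A y (x + z) = qf A y x + qf A y z"
  by (simp add: qf_def ring_distribs sum.distrib)
lemma qf_diff_l: "qf A (y - z) x = qf A y x - qf A z x"
  by (simp add: qf_def ring_distribs sum_subtractf)
lemma qf_diff_r: "qf A y (x - z) = qf A y x - qf A y z"
  by (simp add: qf_def ring_distribs sum_subtractf)
lemma qf_smult_l: "qf A (c *s y) x = cnj c * qf A y x"
  by (simp add: qf_def vector_scalar_mult_def sum_distrib_left mult.assoc)
lemma qf_smult_r: "qf A y (c *s x) = c * qf A y x"
  by (simp add: qf_def vector_scalar_mult_def sum_distrib_left algebra_simps)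
lemma qf_madd: "qf (A + B) y x = qf A y x + qf B y x"
  by (simp add: qf_def ring_distribs sum.distrib)
lemma qf_mdiff: "qf (A - B) y x = qf A y x - qf B y x"
  by (simp add: qf_def ring_distribs sum_subtractf)
lemma mscaleR_comp: "(c *\<^sub>R A)$i$j = complex_of_real c * A$i$j"
  by (simp only: vector_scaleR_component) (simp add: scaleR_conv_of_real)
lemma qf_mscaleR: "qf (c *\<^sub>R A) y x = of_real c * qf A y x"
  by (simp only: qf_def mscaleR_comp sum_distrib_left) (simp add: algebra_simps)
lemma ifz1[simp]: "a * (if P then 1 else 0) * (b::complex) = (if P then a * b else 0)" by simp
lemma ifz2[simp]: "(if P then 1 else 0) * (b::complex) = (if P then b else 0)" by simp
lemma ifz3[simp]: "cnj (if P then 1 else 0) = (if P then 1 else (0::complex))" by simp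
lemma ifz4[simp]: "(a::complex) * (if P then 1 else 0) = (if P then a else 0)" by simp
lemma ifz5[simp]: "(if P then a else 0) * (b::complex) = (if P then a * b else 0)" by simp
lemma qf_mat1: "qf (mat 1) y x = cin y x"
  by (simp add: qf_def cin_def mat_def)
lemma qf_ketbra: "qf (ketbra v) y x = cin y v * cin v x"
  by (simp add: qf_def cin_def ketbra_def sum_product algebra_simps)
lemma qf_axis: "qf A (axis i 1) (axis j 1) = A$i$j"
  by (simp add: qf_def axis_def)
lemma mat_eq_qf: "(\<And>y x. qf A y x = qf B y x) \<Longrightarrow> A = B"
  by (metis qf_axis vec_eq_iff)

lemma cin_add_l: "cin (y + z) x = cin y x + cin z x"
  by (simp add: cin_def ring_distribs sum.distrib)
lemma cin_add_r: "cin y (x + z) = cin y x + cin y z"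
  by (simp add: cin_def ring_distribs sum.distrib)
lemma cin_diff_l: "cin (y - z) x = cin y x - cin z x"
  by (simp add: cin_def ring_distribs sum_subtractf)
lemma cin_diff_r: "cin y (x - z) = cin y x - cin y z"
  by (simp add: cin_def ring_distribs sum_subtractf)
lemma cin_smult_l: "cin (c *s y) x = cnj c * cin y x"
  by (simp add: cin_def vector_scalar_mult_def sum_distrib_left mult.assoc)
lemma cin_smult_r: "cin y (c *s x) = c * cin y x"
  by (simp add: cin_def vector_scalar_mult_def sum_distrib_left algebra_simps)
lemma cin_cnj: "cin y x = cnj (cin x y)"
  by (simp add: cin_def mult.commute)
lemma cin_self: "cin x x = of_real (\<Sum>i\<in>UNIV. (cmod (x$i))^2)"
proof -
  have "\<And>i. cnj (x$i) * x$i = complex_of_real ((cmod (x$i))^2)"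
    by (simp only: complex_norm_square mult.commute)
  then show ?thesis by (simp only: cin_def of_real_sum)
qed
lemma cin_self_zero: "cin x x = 0 \<Longrightarrow> x = 0"
proof -
  assume "cin x x = 0"
  then have "complex_of_real (\<Sum>i\<in>UNIV. (cmod (x$i))^2) = 0" by (simp only: cin_self)
  then have "(\<Sum>i\<in>UNIV. (cmod (x$i))^2) = 0" by (simp only: of_real_eq_0_iff)
  then have "\<forall>i\<in>UNIV. (cmod (x$i))^2 = 0" by (subst (asm) sum_nonneg_eq_0_iff) auto
  then show "x = 0" by (simp add: vec_eq_iff)
qed
lemma norm_cin: "norm x = 1 \<Longrightarrow> cin x x = 1"
  by (simp add: cin_self norm_vec_def L2_set_def)



lemma qf_expand: "qf A (x + w *s y) (x + w *s y) = qf A x x + w * qf A x y + cnj w * qf A y x + cnj w * w * qf A y y"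
  by (simp add: qf_add_l qf_add_r qf_smult_l qf_smult_r algebra_simps)

lemma real_aux: assumes "\<And>s::real. 0 \<le> s*c + s^2*r" "r \<ge> 0" shows "c = 0"
proof (rule ccontr)
  assume "c \<noteq> 0"
  define t where "t = 1 / (r + 1)"
  have t: "t*r + t = 1" "t > 0" using assms(2) by (simp_all add: t_def field_simps)
  have "0 \<le> (-c*t)*c + (-c*t)^2*r" by (rule assms(1))
  also have "(-c*t)*c + (-c*t)^2*r = c^2*t*(t*r + t - 1) - c^2*t^2"
    by (simp add: power2_eq_square algebra_simps)
  also have "\<dots> = -(c^2*t^2)" using t by simp
  finally have "c^2*t^2 \<le> 0" by simp
  moreover have "c^2*t^2 > 0" using \<open>c \<noteq> 0\<close> t by simp
  ultimately show False by simp
qed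

lemma psd_kernel:
  assumes "psd A" "qf A x x = 0"
  shows "qf A x y = 0 \<and> qf A y x = 0"
proof -
  define p where "p = qf A x y"
  define q where "q = qf A y x"
  define r where "r = qf A y y"
  have P: "\<And>z. Im (qf A z z) = 0 \<and> Re (qf A z z) \<ge> 0" using assms(1) by (simp add: psd_qf)
  have r: "Im r = 0" "Re r \<ge> 0" using P[of y] by (auto simp: r_def)
  have E: "\<And>w. qf A (x + w *s y) (x + w *s y) = w * p + cnj w * q + cnj w * w * r"
    using assms(2) by (simp add: qf_expand p_def q_def r_def)
  have A1: "\<And>s::real. 0 \<le> s * (Re p + Re q) + s^2 * Re r"
  proof -
    fix s :: real
    have "Re (qf A (x + complex_of_real s *s y) (x + complex_of_real s *s y)) \<ge> 0" using P by blast
    then show "0 \<le> s * (Re p + Re q) + s^2 * Re r" unfolding E by (simp add: power2_eq_square algebra_simps)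
  qed
  have A2: "\<And>s::real. 0 \<le> s * (Im q - Im p) + s^2 * Re r"
  proof -
    fix s :: real
    have "Re (qf A (x + (\<i> * complex_of_real s) *s y) (x + (\<i> * complex_of_real s) *s y)) \<ge> 0" using P by blast
    then show "0 \<le> s * (Im q - Im p) + s^2 * Re r" unfolding E by (simp add: power2_eq_square algebra_simps)
  qed
  have B1: "Im p + Im q = 0"
  proof -
    have "Im (qf A (x + complex_of_real 1 *s y) (x + complex_of_real 1 *s y)) = 0" using P by blast
    then show ?thesis unfolding E using r by simp
  qed
  have B2: "Re p - Re q = 0"
  proof -
    have "Im (qf A (x + \<i> *s y) (x + \<i> *s y)) = 0" using P by blast
    then show ?thesis unfolding E using r by simp
  qed
  have "Re p + Re q = 0" using real_aux[OF A1] r by blast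
  moreover have "Im q - Im p = 0" using real_aux[OF A2] r by blast
  ultimately have "p = 0" "q = 0" using B1 B2 by (auto simp: complex_eq_iff)
  then show ?thesis by (simp add: p_def q_def)
qed



lemma psd_ketbra: "psd (ketbra v)"
proof -
  have "\<And>x. qf (ketbra v) x x = of_real ((cmod (cin v x))^2)"
  proof -
    fix x
    have "qf (ketbra v) x x = cnj (cin v x) * cin v x" by (simp add: qf_ketbra cin_cnj[of x v])
    then show "qf (ketbra v) x x = of_real ((cmod (cin v x))^2)" by (metis complex_norm_square mult.commute)
  qed
  then show ?thesis by (simp add: psd_qf)
qed

lemma psd_scaleR: "psd A \<Longrightarrow> c \<ge> 0 \<Longrightarrow> psd (c *\<^sub>R A)"
  by (simp add: psd_qf qf_mscaleR)

lemma psd_add: "psd A \<Longrightarrow> psd B \<Longrightarrow> psd (A + B)"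
  by (simp add: psd_qf qf_madd)

lemma cin_self_props: "Im (cin x x) = 0 \<and> Re (cin x x) \<ge> 0"
  by (simp add: cin_self sum_nonneg)

lemma decomp:
  assumes "cin \<phi> \<phi> = 1"
  shows "x = cin \<phi> x *s \<phi> + (x - cin \<phi> x *s \<phi>)" "cin \<phi> (x - cin \<phi> x *s \<phi>) = 0"
  using assms by (simp_all add: cin_diff_r cin_smult_r)

lemma psd_proj_perp:
  assumes "cin \<phi> \<phi> = 1"
  shows "psd (mat 1 - ketbra \<phi>)"
proof -
  have "qf (mat 1 - ketbra \<phi>) x x = cin (x - cin \<phi> x *s \<phi>) (x - cin \<phi> x *s \<phi>)" for x
    using assms by (simp add: qf_mdiff qf_mat1 qf_ketbra cin_diff_l cin_diff_r cin_smult_l cin_smult_r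
      cin_cnj[of x \<phi>] algebra_simps)
  then show ?thesis by (simp add: psd_qf cin_self_props)
qed

lemma conv_zero:
  assumes "psd S" "psd U" "0 < t" "t < 1" "qf (t *\<^sub>R S + (1 - t) *\<^sub>R U) x x = 0"
  shows "qf S x x = 0"
proof -
  have "of_real t * qf S x x + of_real (1 - t) * qf U x x = 0"
    using assms(5) by (simp add: qf_madd qf_mscaleR)
  then have "Re (of_real t * qf S x x + of_real (1 - t) * qf U x x) = 0" by simp
  then have "t * Re (qf S x x) + (1 - t) * Re (qf U x x) = 0" by simp
  moreover have "Re (qf S x x) \<ge> 0" "Re (qf U x x) \<ge> 0" "Im (qf S x x) = 0"
    using assms(1,2) by (auto simp: psd_qf)
  ultimately have "Re (qf S x x) = 0" using assms(3,4)
    by (smt (verit) mult_nonneg_nonneg mult_pos_pos)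
  then show ?thesis using \<open>Im (qf S x x) = 0\<close> by (simp add: complex_eq_iff)
qed



lemma sum_22: "sum f (UNIV::(2\<times>2) set) = f (1,1) + f (1,2) + f (2,1) + f (2,2)"
proof -
  have "sum f (UNIV::(2\<times>2) set) = sum f (UNIV \<times> UNIV)" by simp
  also have "\<dots> = (\<Sum>b\<in>UNIV. \<Sum>a\<in>UNIV. f (b, a))" by (rule sum.cartesian_product')
  finally show ?thesis by (simp add: sum_2 add.assoc)
qed

lemma sum12: "(\<Sum>i=1..2. F i) = F (1::nat) + F 2"
  by (simp add: numeral_2_eq_2)

lemma qf_axis_l: "qf A (axis k 1) x = (\<Sum>j\<in>UNIV. A$k$j * x$j)"
proof -
  have "\<And>i. (\<Sum>j\<in>UNIV. cnj (axis k 1$i) * A$i$j*x$j) = (if i = k then \<Sum>j\<in>UNIV. A$k$j*x$j else 0)"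
    by (simp add: axis_def)
  then show ?thesis by (simp add: qf_def)
qed
lemma cin_axis_l: "cin (axis k 1) x = x$k"
  by (simp add: cin_def axis_def)

lemma cramer:
  fixes aa bb cc dd x y :: complex
  assumes "aa*x + bb*y = 0" "cc*x + dd*y = 0" "aa*dd \<noteq> bb*cc"
  shows "x = 0 \<and> y = 0"
proof -
  have "x*(aa*dd - bb*cc) = dd*(aa*x + bb*y) - bb*(cc*x + dd*y)" by (simp add: algebra_simps)
  also have "\<dots> = 0" using assms by simp
  finally have x: "x = 0" using assms(3) by simp
  have "y*(aa*dd - bb*cc) = aa*(cc*x + dd*y) - cc*(aa*x + bb*y)" by (simp add: algebra_simps)
  also have "\<dots> = 0" using assms by simp
  finally have "y = 0" using assms(3) by simp
  with x show ?thesis by simp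
qed

lemma kI: "kron (mat 1 :: complex^2^2) ((1/2) *\<^sub>R mat 1) = (1/2) *\<^sub>R (mat 1 :: complex^(2\<times>2)^(2\<times>2))"
  by (simp add: vec_eq_iff kron_def mat_def prod_eq_iff mscaleR_comp)

lemma trace_half: "trace ((1/2) *\<^sub>R mat 1 :: complex^2^2) = 1"
  by (simp add: trace_def sum_2 mscaleR_comp mat_def) (simp add: scaleR_conv_of_real)

lemma psd_half_mat1: "psd ((1/2) *\<^sub>R mat 1 :: complex^'n^'n)"
  by (rule psd_scaleR) (simp_all add: psd_qf qf_mat1 cin_self_props)



lemma cancel_lemma:
  fixes X Y :: "'a::real_vector"
  assumes h: "X = t *\<^sub>R X + (1 - t) *\<^sub>R Y" and t: "t < 1"
  shows "Y = X"
proof -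
  have "(1-t) *\<^sub>R Y = (t *\<^sub>R X + (1-t) *\<^sub>R Y) - t *\<^sub>R X" by simp
  also have "\<dots> = X - t *\<^sub>R X" by (simp only: h[symmetric])
  also have "\<dots> = (1-t) *\<^sub>R X" by (simp add: algebra_simps)
  finally show ?thesis using t by simp
qed

lemma fwd:
  fixes \<phi> :: "complex^(2\<times>2)"
  assumes u: "cin \<phi> \<phi> = 1" and det: "\<phi>$(1,1)*\<phi>$(2,2) \<noteq> \<phi>$(1,2)*\<phi>$(2,1)"
  shows "extremal_tester 2 (\<lambda>i. if i = 1 then (1/2) *\<^sub>R ketbra \<phi>
                 else (1/2) *\<^sub>R (mat 1 - ketbra \<phi>))"
    (is "extremal_tester 2 ?T")
proof -
  have T1: "?T 1 = (1/2) *\<^sub>R ketbra \<phi>" and T2: "?T 2 = (1/2) *\<^sub>R (mat 1 - ketbra \<phi>)" by simp_all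
  have i12: "\<And>i. i \<in> {1..2::nat} \<Longrightarrow> i = 1 \<or> i = 2" by auto
  have tester: "is_tester 2 ?T"
    unfolding is_tester_def
  proof (intro conjI)
    show "\<forall>i\<in>{1..2}. psd (?T i)"
      using i12 psd_scaleR[OF psd_ketbra] psd_scaleR[OF psd_proj_perp[OF u]] by fastforce
    show "\<exists>\<rho>::complex^2^2. density \<rho> \<and> (\<Sum>i=1..2. ?T i) = kron (mat 1 :: complex^2^2) \<rho>"
    proof (intro exI conjI)
      show "density ((1/2) *\<^sub>R mat 1 :: complex^2^2)"
        by (simp add: density_def psd_half_mat1 trace_half)
      show "(\<Sum>i=1..2. ?T i) = kron (mat 1 :: complex^2^2) ((1/2) *\<^sub>R mat 1)"
        unfolding kI sum12 by (simp add: scaleR_diff_right)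
    qed
  qed
  moreover have "\<forall>S U (t::real). is_tester 2 S \<and> is_tester 2 U \<and> 0 < t \<and> t < 1 \<and>
        (\<forall>i\<in>{1..2}. ?T i = t *\<^sub>R S i + (1 - t) *\<^sub>R U i)
        \<longrightarrow> (\<forall>i\<in>{1..2}. S i = ?T i \<and> U i = ?T i)"
  proof (intro allI impI)
    fix S U :: "nat \<Rightarrow> complex^(2\<times>2)^(2\<times>2)" and t :: real
    assume H: "is_tester 2 S \<and> is_tester 2 U \<and> 0 < t \<and> t < 1 \<and>
        (\<forall>i\<in>{1..2}. ?T i = t *\<^sub>R S i + (1 - t) *\<^sub>R U i)"
    then have t: "0 < t" "t < 1" by auto
    have "is_tester 2 S" using H by blast
    then obtain \<sigma> :: "complex^2^2" where \<sigma>: "density \<sigma>" "S 1 + S 2 = kron (mat 1) \<sigma>"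
      unfolding is_tester_def sum12 by blast
    have pS: "psd (S 1)" "psd (S 2)" "psd (U 1)" "psd (U 2)" using H by (auto simp: is_tester_def)
    have c1: "?T 1 = t *\<^sub>R S 1 + (1 - t) *\<^sub>R U 1" and c2: "?T 2 = t *\<^sub>R S 2 + (1 - t) *\<^sub>R U 2"
    proof -
      have A: "\<forall>i\<in>{1..2}. ?T i = t *\<^sub>R S i + (1 - t) *\<^sub>R U i" using H by blast
      have "(1::nat) \<in> {1..2}" "(2::nat) \<in> {1..2}" by auto
      then show "?T 1 = t *\<^sub>R S 1 + (1 - t) *\<^sub>R U 1" "?T 2 = t *\<^sub>R S 2 + (1 - t) *\<^sub>R U 2"
        using A by blast+
    qed
    have K1: "qf (S 1) y x = 0 \<and> qf (S 1) x y = 0" if "cin \<phi> x = 0" for x y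
    proof -
      have "qf (?T 1) x x = 0" using that by (simp add: qf_mscaleR qf_ketbra)
      then have "qf (S 1) x x = 0" using conv_zero[OF pS(1) pS(3) t] c1 by simp
      then show ?thesis using psd_kernel[OF pS(1)] by blast
    qed
    have K2: "qf (S 2) y \<phi> = 0" for y
    proof -
      have "qf (?T 2) \<phi> \<phi> = 0" using u by (simp add: qf_mscaleR qf_mdiff qf_mat1 qf_ketbra)
      then have "qf (S 2) \<phi> \<phi> = 0" using conv_zero[OF pS(2) pS(4) t] c2 by simp
      then show ?thesis using psd_kernel[OF pS(2)] by blast
    qed
    define a where "a = qf (S 1) \<phi> \<phi>"
    have R: "qf (S 1) y x = cin y \<phi> * a * cin \<phi> x" for y x
    proof -
      define rx where "rx = x - cin \<phi> x *s \<phi>"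
      define ry where "ry = y - cin \<phi> y *s \<phi>"
      have rx: "cin \<phi> rx = 0" and ry: "cin \<phi> ry = 0" using decomp(2)[OF u] by (simp_all add: rx_def ry_def)
      have "qf (S 1) y x = qf (S 1) (cin \<phi> y *s \<phi> + ry) (cin \<phi> x *s \<phi> + rx)"
        by (simp add: rx_def ry_def)
      also have "\<dots> = cnj (cin \<phi> y) * a * cin \<phi> x"
        using K1[OF rx] K1[OF ry] by (simp add: qf_add_l qf_add_r qf_smult_l qf_smult_r a_def)
      also have "cnj (cin \<phi> y) = cin y \<phi>" by (simp add: cin_cnj[of y \<phi>])
      finally show ?thesis .
    qed
    have EQ: "qf (kron (mat 1) \<sigma>) y \<phi> = cin y \<phi> * a" for y
      using R[of y \<phi>] K2[of y] u by (simp add: \<sigma>(2)[symmetric] qf_madd)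
    have eig: "\<sigma>$a'$1 * \<phi>$(b,1) + \<sigma>$a'$2 * \<phi>$(b,2) = a * \<phi>$(b,a')" for a' b
    proof -
      have "qf (kron (mat 1) \<sigma>) (axis (b,a') 1) \<phi> = \<phi>$(b,a') * a" using EQ by (simp add: cin_axis_l)
      moreover have "qf (kron (mat 1) \<sigma>) (axis (b,a') 1) \<phi> = \<sigma>$a'$1 * \<phi>$(b,1) + \<sigma>$a'$2 * \<phi>$(b,2)"
        using exhaust_2[of b] by (auto simp add: qf_axis_l sum_22 kron_def mat_def)
      ultimately show ?thesis by (simp add: mult.commute)
    qed
    have d1: "\<sigma>$1$1 - a = 0 \<and> \<sigma>$1$2 = 0"
    proof (rule cramer[where aa="\<phi>$(1,1)" and bb="\<phi>$(1,2)" and cc="\<phi>$(2,1)" and dd="\<phi>$(2,2)"])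
      show "\<phi>$(1,1) * (\<sigma>$1$1 - a) + \<phi>$(1,2) * \<sigma>$1$2 = 0" using eig[of 1 1] by (simp add: algebra_simps)
      show "\<phi>$(2,1) * (\<sigma>$1$1 - a) + \<phi>$(2,2) * \<sigma>$1$2 = 0" using eig[of 1 2] by (simp add: algebra_simps)
    qed (rule det)
    have d2: "\<sigma>$2$1 = 0 \<and> \<sigma>$2$2 - a = 0"
    proof (rule cramer[where aa="\<phi>$(1,1)" and bb="\<phi>$(1,2)" and cc="\<phi>$(2,1)" and dd="\<phi>$(2,2)"])
      show "\<phi>$(1,1) * \<sigma>$2$1 + \<phi>$(1,2) * (\<sigma>$2$2 - a) = 0" using eig[of 2 1] by (simp add: algebra_simps)
      show "\<phi>$(2,1) * \<sigma>$2$1 + \<phi>$(2,2) * (\<sigma>$2$2 - a) = 0" using eig[of 2 2] by (simp add: algebra_simps)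
    qed (rule det)
    have "trace \<sigma> = 1" using \<sigma>(1) by (simp add: density_def)
    then have "\<sigma>$1$1 + \<sigma>$2$2 = 1" by (simp add: trace_def sum_2)
    then have ah: "a = 1/2" using d1 d2 by (simp add: mult.commute)
    have \<sigma>h: "\<sigma> = (1/2) *\<^sub>R mat 1"
      using d1 d2 ah by (simp add: vec_eq_iff forall_2 mat_def) (simp add: scaleR_conv_of_real field_simps)
    have S1: "S 1 = ?T 1"
    proof (rule mat_eq_qf)
      fix y x
      show "qf (S 1) y x = qf (?T 1) y x" unfolding R by (simp add: qf_mscaleR qf_ketbra ah)
    qed
    have S2: "S 2 = ?T 2"
    proof -
      have "S 2 = kron (mat 1) \<sigma> - S 1" using \<sigma>(2) by (simp add: algebra_simps)
      then show ?thesis using S1 by (simp add: \<sigma>h kI scaleR_diff_right)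
    qed
    have U: "U i = ?T i" if "S i = ?T i" "?T i = t *\<^sub>R S i + (1 - t) *\<^sub>R U i" for i
      using cancel_lemma[of "?T i" t "U i"] that t by simp
    show "\<forall>i\<in>{1..2}. S i = ?T i \<and> U i = ?T i"
      using i12 S1 S2 U[OF S1 c1] U[OF S2 c2] by fastforce
  qed
  ultimately show ?thesis unfolding extremal_tester_def by blast
qed



lemma vec2_eq: "(x::complex^2) = y \<longleftrightarrow> x$1 = y$1 \<and> x$2 = y$2"
  by (simp add: vec_eq_iff forall_2)
lemma vec22_eq: "(x::complex^(2\<times>2)) = y \<longleftrightarrow>
   x$(1,1) = y$(1,1) \<and> x$(1,2) = y$(1,2) \<and> x$(2,1) = y$(2,1) \<and> x$(2,2) = y$(2,2)"
  by (auto simp add: vec_eq_iff forall_2 split_paired_all)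
lemma mat2_eq: "(A::complex^2^2) = B \<longleftrightarrow>
   A$1$1 = B$1$1 \<and> A$1$2 = B$1$2 \<and> A$2$1 = B$2$1 \<and> A$2$2 = B$2$2"
  by (auto simp add: vec_eq_iff forall_2)

lemma prod_of_det:
  fixes \<phi> :: "complex^(2\<times>2)"
  assumes "\<phi>$(1,1)*\<phi>$(2,2) = \<phi>$(1,2)*\<phi>$(2,1)"
  shows "\<exists>f e. \<phi> = tensor_vec f e"
proof (cases "\<phi>$(1,1) = 0")
  case False
  define f :: "complex^2" where "f = (\<chi> i. if i = 1 then \<phi>$(1,1) else \<phi>$(2,1))"
  define e :: "complex^2" where "e = (\<chi> i. if i = 1 then 1 else \<phi>$(1,2) / \<phi>$(1,1))"
  have "\<phi> = tensor_vec f e" using False assms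
    by (simp add: vec22_eq tensor_vec_def f_def e_def field_simps)
  then show ?thesis by blast
next
  case z: True
  show ?thesis
  proof (cases "\<phi>$(1,2) = 0")
    case False
    then have z2: "\<phi>$(2,1) = 0" using assms z by simp
    define f :: "complex^2" where "f = (\<chi> i. if i = 1 then \<phi>$(1,2) else \<phi>$(2,2))"
    define e :: "complex^2" where "e = (\<chi> i. if i = 1 then 0 else 1)"
    have "\<phi> = tensor_vec f e" using z z2
      by (simp add: vec22_eq tensor_vec_def f_def e_def)
    then show ?thesis by blast
  next
    case True
    define f :: "complex^2" where "f = (\<chi> i. if i = 1 then 0 else 1)"
    define e :: "complex^2" where "e = (\<chi> i. if i = 1 then \<phi>$(2,1) else \<phi>$(2,2))"
    have "\<phi> = tensor_vec f e" using z True
      by (simp add: vec22_eq tensor_vec_def f_def e_def)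
    then show ?thesis by blast
  qed
qed

definition perp :: "complex^2 \<Rightarrow> complex^2" where
  "perp u = (\<chi> i. if i = 1 then - cnj (u$2) else cnj (u$1))"

lemma cin2: "cin (u::complex^2) v = cnj (u$1) * v$1 + cnj (u$2) * v$2"
  by (simp add: cin_def sum_2)

lemma ketbra_perp: "cin u u = 1 \<Longrightarrow> ketbra u + ketbra (perp u) = mat 1"
  by (simp add: mat2_eq ketbra_def perp_def mat_def cin2 algebra_simps)

lemma cin_perp: "cin u u = 1 \<Longrightarrow> cin (perp u) (perp u) = 1"
  by (simp add: perp_def cin2 algebra_simps)

lemma ketbra_tensor: "ketbra (tensor_vec f e) = kron (ketbra f) (ketbra e)"
  by (simp add: vec_eq_iff ketbra_def kron_def tensor_vec_def)

lemma kron_add_l: "kron (A + B) C = kron A C + kron B C"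
  by (simp add: vec_eq_iff kron_def algebra_simps)
lemma kron_add_r: "kron A (B + C) = kron A B + kron A C"
  by (simp add: vec_eq_iff kron_def algebra_simps)
lemma kron_scaleR_r: "kron A (c *\<^sub>R B) = c *\<^sub>R kron A B"
  by (simp add: vec_eq_iff kron_def mscaleR_comp algebra_simps)
lemma kron_mat1: "kron (mat 1) (mat 1) = mat 1"
  by (simp add: vec_eq_iff kron_def mat_def prod_eq_iff)

lemma cin_tensor: "cin (tensor_vec (f::complex^2) (e::complex^2)) (tensor_vec f e) = cin f f * cin e e"
  by (simp add: cin_def sum_22 sum_2 tensor_vec_def algebra_simps)

lemma trace_ketbra: "trace (ketbra u) = cin u u"
  by (simp add: trace_def cin_def ketbra_def mult.commute)
lemma trace_scaleR: "trace (c *\<^sub>R (A::complex^'n^'n)) = of_real c * trace A"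
  unfolding trace_def mscaleR_comp by (simp add: sum_distrib_left)



lemma nonext:
  fixes f e :: "complex^2"
  assumes uf: "cin f f = 1" and ue: "cin e e = 1"
  shows "\<not> extremal_tester 2 (\<lambda>i. if i = 1 then (1/2) *\<^sub>R ketbra (tensor_vec f e)
                 else (1/2) *\<^sub>R (mat 1 - ketbra (tensor_vec f e)))"
    (is "\<not> extremal_tester 2 ?T")
proof
  assume ext: "extremal_tester 2 ?T"
  define A where "A = kron (ketbra f) (ketbra e)"
  define B where "B = kron (ketbra (perp f)) (ketbra e)"
  define C where "C = kron (ketbra f) (ketbra (perp e))"
  define D where "D = kron (ketbra (perp f)) (ketbra (perp e))"
  have kP: "ketbra (tensor_vec f e) = A" by (simp add: A_def ketbra_tensor)
  have I: "mat 1 = A + B + C + D"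
  proof -
    have "(mat 1 :: complex^(2\<times>2)^(2\<times>2)) = kron (mat 1) (mat 1)" by (simp add: kron_mat1)
    also have "\<dots> = kron (ketbra f + ketbra (perp f)) (ketbra e + ketbra (perp e))"
      using ketbra_perp[OF uf] ketbra_perp[OF ue] by simp
    finally show ?thesis by (simp add: kron_add_l kron_add_r A_def B_def C_def D_def add.assoc)
  qed
  have IE: "kron (mat 1) (ketbra e) = A + B"
    using ketbra_perp[OF uf] by (metis A_def B_def kron_add_l)
  have IEb: "kron (mat 1) (ketbra (perp e)) = C + D"
    using ketbra_perp[OF uf] by (metis C_def D_def kron_add_l)
  have pA: "psd A" "psd B" "psd C" "psd D"
    unfolding A_def B_def C_def D_def ketbra_tensor[symmetric] by (simp_all add: psd_ketbra)
  define S where "S = (\<lambda>i::nat. if i = 1 then (3/4) *\<^sub>R A else (3/4) *\<^sub>R B + (1/4) *\<^sub>R (C + D))"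
  define U where "U = (\<lambda>i::nat. if i = 1 then (1/4) *\<^sub>R A else (1/4) *\<^sub>R B + (3/4) *\<^sub>R (C + D))"
  have i12: "\<And>i. i \<in> {1..2::nat} \<Longrightarrow> i = 1 \<or> i = 2" by auto
  have tr: "is_tester 2 (\<lambda>i::nat. if i = 1 then p *\<^sub>R A else p *\<^sub>R B + (1 - p) *\<^sub>R (C + D))"
    if p: "0 \<le> p" "p \<le> 1" for p :: real
    unfolding is_tester_def
  proof (intro conjI)
    show "\<forall>i\<in>{1..2}. psd (if (i::nat) = 1 then p *\<^sub>R A else p *\<^sub>R B + (1 - p) *\<^sub>R (C + D))"
      using i12 p pA by (auto intro!: psd_add psd_scaleR)
    show "\<exists>\<rho>::complex^2^2. density \<rho> \<and> (\<Sum>i=1..2. (if (i::nat) = 1 then p *\<^sub>R A else p *\<^sub>R B + (1 - p) *\<^sub>R (C + D)))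
            = kron (mat 1 :: complex^2^2) \<rho>"
    proof (intro exI conjI)
      show "density (p *\<^sub>R ketbra e + (1 - p) *\<^sub>R ketbra (perp e))"
        unfolding density_def using p
        by (auto intro!: psd_add psd_scaleR psd_ketbra simp: trace_add trace_scaleR trace_ketbra ue cin_perp[OF ue])
      have "kron (mat 1) (p *\<^sub>R ketbra e + (1 - p) *\<^sub>R ketbra (perp e)) = p *\<^sub>R (A + B) + (1 - p) *\<^sub>R (C + D)"
        by (simp add: kron_add_r kron_scaleR_r IE IEb)
      then show "(\<Sum>i=1..2. (if (i::nat) = 1 then p *\<^sub>R A else p *\<^sub>R B + (1 - p) *\<^sub>R (C + D)))
            = kron (mat 1) (p *\<^sub>R ketbra e + (1 - p) *\<^sub>R ketbra (perp e))"
        unfolding sum12 by (simp add: scaleR_add_right add.assoc)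
    qed
  qed
  have e1: "1 - 3/4 = (1/4::real)" and e2: "1 - 1/4 = (3/4::real)" by simp_all
  have tS: "is_tester 2 S" using tr[of "3/4", unfolded e1] by (simp add: S_def)
  have tU: "is_tester 2 U" using tr[of "1/4", unfolded e2] by (simp add: U_def)
  have conv: "\<forall>i\<in>{1..2}. ?T i = (1/2) *\<^sub>R S i + (1 - 1/2) *\<^sub>R U i"
  proof -
    have "?T 1 = (1/2) *\<^sub>R S 1 + (1 - 1/2) *\<^sub>R U 1"
      by (simp add: S_def U_def kP vec_eq_iff algebra_simps) (simp add: scaleR_conv_of_real algebra_simps)
    moreover have "?T 2 = (1/2) *\<^sub>R S 2 + (1 - 1/2) *\<^sub>R U 2"
      by (simp add: S_def U_def kP I vec_eq_iff algebra_simps) (simp add: scaleR_conv_of_real algebra_simps)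
    ultimately show ?thesis using i12 by blast
  qed
  have allq: "\<forall>S U (t::real). is_tester 2 S \<and> is_tester 2 U \<and> 0 < t \<and> t < 1 \<and>
        (\<forall>i\<in>{1..2}. ?T i = t *\<^sub>R S i + (1 - t) *\<^sub>R U i)
        \<longrightarrow> (\<forall>i\<in>{1..2}. S i = ?T i \<and> U i = ?T i)"
    using ext unfolding extremal_tester_def by blast
  have "0 < (1/2::real)" "(1/2::real) < 1" by simp_all
  then have "\<forall>i\<in>{1..2}. S i = ?T i \<and> U i = ?T i"
    using allq tS tU conv by blast
  moreover have "(1::nat) \<in> {1..2}" by simp
  ultimately have "S 1 = ?T 1" by blast
  then have "(3/4) *\<^sub>R A = (1/2) *\<^sub>R A" by (simp add: S_def kP)
  then have "qf ((3/4) *\<^sub>R A) (tensor_vec f e) (tensor_vec f e) = qf ((1/2) *\<^sub>R A) (tensor_vec f e) (tensor_vec f e)"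
    by simp
  moreover have "qf A (tensor_vec f e) (tensor_vec f e) = 1"
    by (simp add: kP[symmetric] qf_ketbra cin_tensor uf ue)
  ultimately show False by (simp add: qf_mscaleR)
qed



lemma vscaleR_comp: "(r *\<^sub>R (x::complex^'n))$i = complex_of_real r * x$i"
  by (simp only: vector_scaleR_component) (simp add: scaleR_conv_of_real)
lemma cin_scaleR_l: "cin (r *\<^sub>R y) x = of_real r * cin y x"
  by (simp only: cin_def vscaleR_comp) (simp add: sum_distrib_left algebra_simps)
lemma cin_scaleR_r: "cin y (r *\<^sub>R x) = of_real r * cin y x"
  by (simp only: cin_def vscaleR_comp) (simp add: sum_distrib_left algebra_simps)

lemma tensor_rescale: "c \<noteq> 0 \<Longrightarrow> tensor_vec ((1/c) *\<^sub>R f) (c *\<^sub>R e) = tensor_vec f e"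
  unfolding tensor_vec_def vec_eq_iff vscaleR_comp by simp

theorem mainTheorem11:
  fixes \<phi> :: "complex^(2 \<times> 2)"
  assumes "norm \<phi> = 1"
  shows "extremal_tester 2
           (\<lambda>i. if i = 1 then (1/2) *\<^sub>R ketbra \<phi>
                 else (1/2) *\<^sub>R (mat 1 - ketbra \<phi>))
         \<longleftrightarrow> \<not> (\<exists>(f::complex^2) (e::complex^2). \<phi> = tensor_vec f e)"
proof
  have u: "cin \<phi> \<phi> = 1" using assms by (rule norm_cin)
  show "\<not> (\<exists>(f::complex^2) (e::complex^2). \<phi> = tensor_vec f e)" if ext: "extremal_tester 2
           (\<lambda>i. if i = 1 then (1/2) *\<^sub>R ketbra \<phi>
                 else (1/2) *\<^sub>R (mat 1 - ketbra \<phi>))"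
  proof
    assume "\<exists>(f::complex^2) (e::complex^2). \<phi> = tensor_vec f e"
    then obtain f e :: "complex^2" where fe: "\<phi> = tensor_vec f e" by blast
    have prod1: "cin f f * cin e e = 1" using u fe cin_tensor by simp
    define nf where "nf = Re (cin f f)"
    have cf: "cin f f = of_real nf" using cin_self_props[of f] by (simp add: nf_def complex_eq_iff)
    have nf0: "nf \<ge> 0" using cin_self_props[of f] by (simp add: nf_def)
    have nfn: "nf \<noteq> 0" using prod1 cf by auto
    define c where "c = sqrt nf"
    have c0: "c \<noteq> 0" using nfn nf0 by (simp add: c_def)
    have cc: "c * c = nf" using nf0 by (simp add: c_def)
    have u1: "cin ((1/c) *\<^sub>R f) ((1/c) *\<^sub>R f) = 1"
      using c0 nfn by (simp add: cin_scaleR_l cin_scaleR_r cf cc[symmetric] field_simps)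
    have u2: "cin (c *\<^sub>R e) (c *\<^sub>R e) = 1"
    proof -
      have "cin (c *\<^sub>R e) (c *\<^sub>R e) = of_real (c*c) * cin e e" by (simp add: cin_scaleR_l cin_scaleR_r)
      also have "\<dots> = cin f f * cin e e" by (simp add: cc cf)
      finally show ?thesis using prod1 by simp
    qed
    have h: "\<phi> = tensor_vec ((1/c) *\<^sub>R f) (c *\<^sub>R e)" by (simp add: fe tensor_rescale[OF c0])
    show False using ext nonext[OF u1 u2] unfolding h by blast
  qed
  show "extremal_tester 2
           (\<lambda>i. if i = 1 then (1/2) *\<^sub>R ketbra \<phi>
                 else (1/2) *\<^sub>R (mat 1 - ketbra \<phi>))"
    if np: "\<not> (\<exists>(f::complex^2) (e::complex^2). \<phi> = tensor_vec f e)"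
  proof (rule fwd[OF u])
    show "\<phi>$(1,1)*\<phi>$(2,2) \<noteq> \<phi>$(1,2)*\<phi>$(2,1)" using prod_of_det np by blast
  qed
qed

end
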